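(* Let $\sigma$ be a reasonable strategy of player $0$ in the escape arena $\mathcal{A}_\bot$. If there is a vertex $s\in W_0$ with $\mathcal{V}_\sigma(s)\prec\infty$, then $\sigma$ has at least one strict improvement, i.e. $S_\sigma\neq\emptyset$.
   Context: Parity game arena: $\mathcal{A}=(V,E,o,c)$ with $V$ finite, $E\subseteq V\times V$, every vertex has a successor, owner map $o:V\to\{0,1\}$, colouring $c:V\to\{0,\dots,d-1\}$; $V_i=o^{-1}(i)$. An infinite vertex sequence is won by player $0$ iff the largest colour occurring infinitely often is even. A cycle is $i$-dominated if its largest colour has parity $i$. $W_0$ is the set of vertices from which player $0$ has a winning strategy in the parity game on $\mathcal{A}$. Escape arena $\mathcal{A}_\bot$: vertices $V\cup\{\bot\}$, edges $E\cup(V_0\times\{\bot\})$, $\bot$ owned by player $0$ with no outgoing edges. $E_0$ = edges of $\mathcal{A}_\bot$ leaving $V_0$, $E_1=E\cap(V_1\times V)$. A strategy of player $i$ is a set $\sigma\subseteq E_i$ with $s\sigma\neq\emptyset$ for all $s\in V_i$. $\mathcal{A}_\bot|_{\sigma,\tau}$ has edges $\sigma\cup\tau$, $\mathcal{A}_\bot|_\sigma$ has edges $\sigma\cup E_1$; plays are maximal paths. Colour profiles $\mathcal{P}=\mathbb{Z}^d\cup\{-\infty,\infty\}$, $\text{\o}$ zero vector; $\wp(s)$ unit vector at coordinate $c(s)$; for a finite path the sum over vertices in $V$; infinite play: $\infty$ if won by player $0$, else $-\infty$. Addition componentwise, $x+\pm\infty=\pm\infty$. Order $\prec$: $-\infty$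 least, $\infty$ greatest; for distinct $p,p'\in\mathbb{Z}^d$ with $k$ the largest differing index, $p\prec p'$ iff ($k$ even, $p_k<p'_k$) or ($k$ odd, $p_k>p'_k$). Valuation: $\mathcal{V}_\sigma(\bot)=\text{\o}$, $\mathcal{V}_\sigma(s)=\min^\prec_\tau\max^\prec\{\wp(\pi)\mid\pi$ a play in $\mathcal{A}_\bot|_{\sigma,\tau}$ from $s\}$. $\sigma$ is reasonable if $\mathcal{A}_\bot|_\sigma$ has no $1$-dominated cycle. $S_\sigma$ is the set of edges $(s,t)\in E_0$ with $\mathcal{V}_\sigma(s)\prec\wp(s)+\mathcal{V}_\sigma(t)$ (strict improvements). *)

theory Defs
  imports Main
begin

definition arena :: "'v set \<Rightarrow> ('v \<times> 'v) set \<Rightarrow> ('v \<Rightarrow> nat) \<Rightarrow> ('v \<Rightarrow> nat) \<Rightarrow> nat \<Rightarrow> bool" where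
  "arena V E own col d \<longleftrightarrow> finite V \<and> E \<subseteq> V \<times> V \<and> (\<forall>v\<in>V. \<exists>w. (v, w) \<in> E)
     \<and> (\<forall>v\<in>V. own v = 0 \<or> own v = 1) \<and> (\<forall>v\<in>V. col v < d)"

definition won0_seq :: "('v \<Rightarrow> nat) \<Rightarrow> (nat \<Rightarrow> 'v) \<Rightarrow> bool" where
  "won0_seq col f \<longleftrightarrow> even (Max {c. \<exists>\<^sub>\<infinity> n. col (f n) = c})"

definition hist_strategy0 :: "'v set \<Rightarrow> ('v \<times> 'v) set \<Rightarrow> ('v \<Rightarrow> nat) \<Rightarrow> ('v list \<Rightarrow> 'v) \<Rightarrow> bool" where
  "hist_strategy0 V E own str \<longleftrightarrow>
     (\<forall>h. h \<noteq> [] \<and> set h \<subseteq> V \<and> own (last h) = 0 \<longrightarrow> (last h, str h) \<in> E)"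

definition consistent_play :: "('v \<times> 'v) set \<Rightarrow> ('v \<Rightarrow> nat) \<Rightarrow> ('v list \<Rightarrow> 'v) \<Rightarrow> 'v \<Rightarrow> (nat \<Rightarrow> 'v) \<Rightarrow> bool" where
  "consistent_play E own str s f \<longleftrightarrow> f 0 = s \<and> (\<forall>n. (f n, f (Suc n)) \<in> E)
     \<and> (\<forall>n. own (f n) = 0 \<longrightarrow> f (Suc n) = str (map f [0..<Suc n]))"

definition W0 :: "'v set \<Rightarrow> ('v \<times> 'v) set \<Rightarrow> ('v \<Rightarrow> nat) \<Rightarrow> ('v \<Rightarrow> nat) \<Rightarrow> 'v set" where
  "W0 V E own col = {s \<in> V. \<exists>str. hist_strategy0 V E own str \<and>
        (\<forall>f. consistent_play E own str s f \<longrightarrow> won0_seq col f)}"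

text \<open>Vertices of the escape arena are of type 'v option: Some v for v in V, None for bottom.\<close>

definition esc_edges :: "'v set \<Rightarrow> ('v \<times> 'v) set \<Rightarrow> ('v \<Rightarrow> nat) \<Rightarrow> ('v option \<times> 'v option) set" where
  "esc_edges V E own = {(Some u, Some v) | u v. (u, v) \<in> E} \<union> {(Some v, None) | v. v \<in> V \<and> own v = 0}"

definition E0 :: "'v set \<Rightarrow> ('v \<times> 'v) set \<Rightarrow> ('v \<Rightarrow> nat) \<Rightarrow> ('v option \<times> 'v option) set" where
  "E0 V E own = {(x, y) \<in> esc_edges V E own. \<exists>v. x = Some v \<and> v \<in> V \<and> own v = 0}"

definition E1 :: "'v set \<Rightarrow> ('v \<times> 'v) set \<Rightarrow> ('v \<Rightarrow> nat) \<Rightarrow> ('v option \<times> 'v option) set" where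
  "E1 V E own = {(Some u, Some v) | u v. (u, v) \<in> E \<and> own u = 1}"

definition strategy :: "nat \<Rightarrow> 'v set \<Rightarrow> ('v \<times> 'v) set \<Rightarrow> ('v \<Rightarrow> nat)
    \<Rightarrow> ('v option \<times> 'v option) set \<Rightarrow> bool" where
  "strategy i V E own \<sigma> \<longleftrightarrow> \<sigma> \<subseteq> (if i = 0 then E0 V E own else E1 V E own)
     \<and> (\<forall>s\<in>V. own s = i \<longrightarrow> (\<exists>y. (Some s, y) \<in> \<sigma>))"

datatype prof = NegInf | Fin "nat \<Rightarrow> int" | PosInf

definition unitv :: "nat \<Rightarrow> (nat \<Rightarrow> int)" where
  "unitv c = (\<lambda>i. if i = c then 1 else 0)"

definition vec_less :: "(nat \<Rightarrow> int) \<Rightarrow> (nat \<Rightarrow> int) \<Rightarrow> bool" where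
  "vec_less p q \<longleftrightarrow> p \<noteq> q \<and>
     (let k = Max {i. p i \<noteq> q i} in (even k \<and> p k < q k) \<or> (odd k \<and> p k > q k))"

fun prof_less :: "prof \<Rightarrow> prof \<Rightarrow> bool" where
  "prof_less NegInf y = (y \<noteq> NegInf)"
| "prof_less (Fin p) y = (case y of NegInf \<Rightarrow> False | Fin q \<Rightarrow> vec_less p q | PosInf \<Rightarrow> True)"
| "prof_less PosInf y = False"

definition prof_le :: "prof \<Rightarrow> prof \<Rightarrow> bool" where
  "prof_le x y \<longleftrightarrow> x = y \<or> prof_less x y"

fun prof_add :: "prof \<Rightarrow> prof \<Rightarrow> prof" where
  "prof_add (Fin p) (Fin q) = Fin (\<lambda>i. p i + q i)"
| "prof_add x PosInf = PosInf"
| "prof_add x NegInf = NegInf"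
| "prof_add PosInf (Fin q) = PosInf"
| "prof_add NegInf (Fin q) = NegInf"

definition wp :: "('v \<Rightarrow> nat) \<Rightarrow> 'v option \<Rightarrow> prof" where
  "wp col x = (case x of None \<Rightarrow> Fin (\<lambda>i. 0) | Some v \<Rightarrow> Fin (unitv (col v)))"

definition path_prof :: "('v \<Rightarrow> nat) \<Rightarrow> 'v option list \<Rightarrow> prof" where
  "path_prof col xs = Fin (\<lambda>i. \<Sum>x\<leftarrow>xs. (case x of None \<Rightarrow> 0 | Some v \<Rightarrow> unitv (col v) i))"

definition fin_play :: "('v option \<times> 'v option) set \<Rightarrow> 'v option \<Rightarrow> 'v option list \<Rightarrow> bool" where
  "fin_play F s xs \<longleftrightarrow> xs \<noteq> [] \<and> hd xs = s \<and>
     (\<forall>i. Suc i < length xs \<longrightarrow> (xs ! i, xs ! Suc i) \<in> F) \<and> (\<forall>y. (last xs, y) \<notin> F)"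

definition inf_play :: "('v option \<times> 'v option) set \<Rightarrow> 'v option \<Rightarrow> (nat \<Rightarrow> 'v option) \<Rightarrow> bool" where
  "inf_play F s f \<longleftrightarrow> f 0 = s \<and> (\<forall>n. (f n, f (Suc n)) \<in> F)"

definition play_profs :: "('v \<Rightarrow> nat) \<Rightarrow> ('v option \<times> 'v option) set \<Rightarrow> 'v option \<Rightarrow> prof set" where
  "play_profs col F s =
     {path_prof col xs | xs. fin_play F s xs} \<union>
     {(if won0_seq col (\<lambda>n. the (f n)) then PosInf else NegInf) | f. inf_play F s f}"

definition greatest_prof :: "prof set \<Rightarrow> prof" where
  "greatest_prof S = (THE x. x \<in> S \<and> (\<forall>y\<in>S. prof_le y x))"

definition least_prof :: "prof set \<Rightarrow> prof" where
  "least_prof S = (THE x. x \<in> S \<and> (\<forall>y\<in>S. prof_le x y))"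

definition valuation :: "'v set \<Rightarrow> ('v \<times> 'v) set \<Rightarrow> ('v \<Rightarrow> nat) \<Rightarrow> ('v \<Rightarrow> nat)
    \<Rightarrow> ('v option \<times> 'v option) set \<Rightarrow> 'v option \<Rightarrow> prof" where
  "valuation V E own col \<sigma> x = (case x of None \<Rightarrow> Fin (\<lambda>i. 0)
     | Some s \<Rightarrow> least_prof {greatest_prof (play_profs col (\<sigma> \<union> \<tau>) (Some s)) | \<tau>. strategy 1 V E own \<tau>})"

definition cycle_in :: "('v option \<times> 'v option) set \<Rightarrow> 'v option list \<Rightarrow> bool" where
  "cycle_in F xs \<longleftrightarrow> xs \<noteq> [] \<and> (\<forall>i. Suc i < length xs \<longrightarrow> (xs ! i, xs ! Suc i) \<in> F)
     \<and> (last xs, hd xs) \<in> F"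

definition reasonable :: "'v set \<Rightarrow> ('v \<times> 'v) set \<Rightarrow> ('v \<Rightarrow> nat) \<Rightarrow> ('v \<Rightarrow> nat)
    \<Rightarrow> ('v option \<times> 'v option) set \<Rightarrow> bool" where
  "reasonable V E own col \<sigma> \<longleftrightarrow>
     (\<forall>xs. cycle_in (\<sigma> \<union> E1 V E own) xs \<longrightarrow> \<not> odd (Max {col v | v. Some v \<in> set xs}))"

definition improvements :: "'v set \<Rightarrow> ('v \<times> 'v) set \<Rightarrow> ('v \<Rightarrow> nat) \<Rightarrow> ('v \<Rightarrow> nat)
    \<Rightarrow> ('v option \<times> 'v option) set \<Rightarrow> ('v option \<times> 'v option) set" where
  "improvements V E own col \<sigma> = {(s, t) \<in> E0 V E own.
     prof_less (valuation V E own col \<sigma> s) (prof_add (wp col s) (valuation V E own col \<sigma> t))}"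

end

theory Submission
  imports Defs "HOL-Library.Infinite_Set"
begin


definition fsupp :: "(nat \<Rightarrow> int) \<Rightarrow> bool" where
  "fsupp p \<longleftrightarrow> finite {i. p i \<noteq> 0}"

fun good :: "prof \<Rightarrow> bool" where
  "good (Fin p) = fsupp p" | "good NegInf = True" | "good PosInf = True"

lemma fsupp_diff_fin:
  assumes "fsupp p" "fsupp q" shows "finite {i. p i \<noteq> q i}"
proof -
  have "{i. p i \<noteq> q i} \<subseteq> {i. p i \<noteq> 0} \<union> {i. q i \<noteq> 0}" by auto
  thus ?thesis using assms unfolding fsupp_def by (meson finite_Un finite_subset)
qed

lemma fsupp_add: "fsupp p \<Longrightarrow> fsupp q \<Longrightarrow> fsupp (\<lambda>i. p i + q i)"
  unfolding fsupp_def
  by (rule finite_subset[of _ "{i. p i \<noteq> 0} \<union> {i. q i \<noteq> 0}"]) auto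

lemma vec_less_shift:
  "vec_less (\<lambda>i. r i + p i) (\<lambda>i. r i + q i) \<longleftrightarrow> vec_less p q"
proof -
  have e: "{i. r i + p i \<noteq> r i + q i} = {i. p i \<noteq> q i}" by auto
  have n: "((\<lambda>i. r i + p i) = (\<lambda>i. r i + q i)) = (p = q)"
    by (auto simp: fun_eq_iff)
  show ?thesis unfolding vec_less_def e n Let_def by simp
qed

lemma vec_less_irrefl: "\<not> vec_less p p" by (simp add: vec_less_def)

lemma vec_less_asym: "vec_less p q \<Longrightarrow> \<not> vec_less q p"
proof -
  have e: "{i. q i \<noteq> p i} = {i. p i \<noteq> q i}" by auto
  show "vec_less p q \<Longrightarrow> \<not> vec_less q p" unfolding vec_less_def e Let_def by auto
qed

lemma vec_less_total:
  assumes "fsupp p" "fsupp q" "p \<noteq> q" shows "vec_less p q \<or> vec_less q p"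
proof -
  let ?S = "{i. p i \<noteq> q i}"
  have e: "{i. q i \<noteq> p i} = ?S" by auto
  have f: "finite ?S" using fsupp_diff_fin assms by blast
  have ne: "?S \<noteq> {}" using assms(3) by auto
  have "Max ?S \<in> ?S" using f ne by (rule Max_in)
  hence "p (Max ?S) \<noteq> q (Max ?S)" by simp
  thus ?thesis using assms(3) unfolding vec_less_def e Let_def by auto
qed

definition vpos :: "(nat \<Rightarrow> int) \<Rightarrow> bool" where
  "vpos r \<longleftrightarrow> vec_less (\<lambda>i. 0) r"

lemma vec_less_vpos: "vec_less p q \<longleftrightarrow> vpos (\<lambda>i. q i - p i)"
  unfolding vpos_def using vec_less_shift[of "\<lambda>i. - p i" p q] by simp

lemma vpos_unfold:
  "vpos r \<longleftrightarrow> r \<noteq> (\<lambda>i. 0) \<and> (let k = Max {i. r i \<noteq> 0} in (even k \<and> 0 < r k) \<or> (odd k \<and> r k < 0))"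
proof -
  have e: "{i. 0 \<noteq> r i} = {i. r i \<noteq> 0}" by auto
  have e2: "((\<lambda>i. 0::int) \<noteq> r) = (r \<noteq> (\<lambda>i. 0))" by auto
  show ?thesis unfolding vpos_def vec_less_def e e2 by simp
qed

lemma vpos_add:
  assumes a: "vpos a" and b: "vpos b" and fa: "fsupp a" and fb: "fsupp b"
  shows "vpos (\<lambda>i. a i + b i)"
proof -
  let ?A = "{i. a i \<noteq> 0}" and ?B = "{i. b i \<noteq> 0}" and ?C = "{i. a i + b i \<noteq> 0}"
  define ka where "ka = Max ?A"
  define kb where "kb = Max ?B"
  have fA: "finite ?A" and fB: "finite ?B" using fa fb unfolding fsupp_def by auto
  have neA: "?A \<noteq> {}" using a unfolding vpos_unfold by auto
  have neB: "?B \<noteq> {}" using b unfolding vpos_unfold by auto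
  have fC: "finite ?C" using fsupp_add[OF fa fb] unfolding fsupp_def by auto
  have kaA: "a ka \<noteq> 0" using Max_in[OF fA neA] ka_def by auto
  have kbB: "b kb \<noteq> 0" using Max_in[OF fB neB] kb_def by auto
  have abA: "\<And>i. i > ka \<Longrightarrow> a i = 0" using Max_ge[OF fA] ka_def by (metis (mono_tags) leD mem_Collect_eq)
  have abB: "\<And>i. i > kb \<Longrightarrow> b i = 0" using Max_ge[OF fB] kb_def by (metis (mono_tags) leD mem_Collect_eq)
  have sa: "(even ka \<and> 0 < a ka) \<or> (odd ka \<and> a ka < 0)" using a unfolding vpos_unfold ka_def Let_def by auto
  have sb: "(even kb \<and> 0 < b kb) \<or> (odd kb \<and> b kb < 0)" using b unfolding vpos_unfold kb_def Let_def by auto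
  show ?thesis
  proof (cases "kb < ka")
    case True
    have m: "Max ?C = ka"
    proof (rule Max_eqI[OF fC])
      fix y assume "y \<in> ?C" thus "y \<le> ka"
      proof (rule contrapos_pp)
        assume "\<not> y \<le> ka" hence "a y = 0" "b y = 0" using True abA abB by auto
        thus "y \<notin> ?C" by simp
      qed
    qed (use True abB kaA in auto)
    have "a ka + b ka \<noteq> 0" using True abB kaA by auto
    hence "(\<lambda>i. a i + b i) ka \<noteq> (\<lambda>i. 0) ka" by simp
    hence ne: "(\<lambda>i. a i + b i) \<noteq> (\<lambda>i. 0)" by metis
    show ?thesis unfolding vpos_unfold m Let_def using ne sa abB True by auto
  next
    case False
    show ?thesis
    proof (cases "ka < kb")
      case True
      have m: "Max ?C = kb"
      proof (rule Max_eqI[OF fC])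
        fix y assume "y \<in> ?C" thus "y \<le> kb"
        proof (rule contrapos_pp)
          assume "\<not> y \<le> kb" hence "a y = 0" "b y = 0" using True abA abB by auto
          thus "y \<notin> ?C" by simp
        qed
      qed (use True abA kbB in auto)
      have "a kb + b kb \<noteq> 0" using True abA kbB by auto
      hence "(\<lambda>i. a i + b i) kb \<noteq> (\<lambda>i. 0) kb" by simp
      hence ne: "(\<lambda>i. a i + b i) \<noteq> (\<lambda>i. 0)" by metis
      show ?thesis unfolding vpos_unfold m Let_def using ne sb abA True by auto
    next
      case False2: False
      hence eq: "ka = kb" using False by simp
      have nz: "a ka + b ka \<noteq> 0" using sa sb eq by auto
      have m: "Max ?C = ka"
      proof (rule Max_eqI[OF fC])
        fix y assume "y \<in> ?C" thus "y \<le> ka"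
        proof (rule contrapos_pp)
          assume "\<not> y \<le> ka" hence "a y = 0" "b y = 0" using eq abA abB by auto
          thus "y \<notin> ?C" by simp
        qed
      qed (use nz in auto)
      have "(\<lambda>i. a i + b i) ka \<noteq> (\<lambda>i. 0) ka" using nz by simp
      hence ne: "(\<lambda>i. a i + b i) \<noteq> (\<lambda>i. 0)" by metis
      show ?thesis unfolding vpos_unfold m Let_def using ne sa sb eq nz by auto
    qed
  qed
qed

lemma fsupp_diff: "fsupp p \<Longrightarrow> fsupp q \<Longrightarrow> fsupp (\<lambda>i. q i - p i)"
  unfolding fsupp_def
  by (rule finite_subset[of _ "{i. p i \<noteq> 0} \<union> {i. q i \<noteq> 0}"]) auto

lemma vec_less_trans:
  assumes "vec_less p q" "vec_less q r" "fsupp p" "fsupp q" "fsupp r"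
  shows "vec_less p r"
proof -
  have a: "vpos (\<lambda>i. q i - p i)" using assms(1) unfolding vec_less_vpos .
  have b: "vpos (\<lambda>i. r i - q i)" using assms(2) unfolding vec_less_vpos .
  have "vpos (\<lambda>i. (q i - p i) + (r i - q i))"
    by (rule vpos_add[OF a b fsupp_diff fsupp_diff]) (use assms in auto)
  thus ?thesis unfolding vec_less_vpos by simp
qed

lemma prof_less_trans:
  "prof_less x y \<Longrightarrow> prof_less y z \<Longrightarrow> good x \<Longrightarrow> good y \<Longrightarrow> good z \<Longrightarrow> prof_less x z"
  by (cases x; cases y; cases z; simp; metis vec_less_trans)

lemma prof_less_asym: "prof_less x y \<Longrightarrow> \<not> prof_less y x"
  by (cases x; cases y) (auto dest: vec_less_asym)

lemma prof_less_irrefl: "\<not> prof_less x x"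
  by (cases x) (auto simp: vec_less_irrefl)

lemma prof_less_total: "good x \<Longrightarrow> good y \<Longrightarrow> x \<noteq> y \<Longrightarrow> prof_less x y \<or> prof_less y x"
  by (cases x; cases y) (auto dest: vec_less_total)

lemma prof_le_trans:
  "prof_le x y \<Longrightarrow> prof_le y z \<Longrightarrow> good x \<Longrightarrow> good y \<Longrightarrow> good z \<Longrightarrow> prof_le x z"
  unfolding prof_le_def using prof_less_trans by blast

lemma prof_le_antisym: "prof_le x y \<Longrightarrow> prof_le y x \<Longrightarrow> x = y"
  unfolding prof_le_def using prof_less_asym by blast

lemma not_less_le: "good x \<Longrightarrow> good y \<Longrightarrow> \<not> prof_less x y \<Longrightarrow> prof_le y x"
  unfolding prof_le_def using prof_less_total by blast

lemma prof_le_add: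
  assumes "prof_le x y" shows "prof_le (prof_add (Fin a) x) (prof_add (Fin a) y)"
  using assms unfolding prof_le_def
  by (cases x; cases y) (auto simp: vec_less_shift)

lemma good_add: "good x \<Longrightarrow> fsupp a \<Longrightarrow> good (prof_add (Fin a) x)"
  by (cases x) (auto intro: fsupp_add)

lemma prof_le_PosInf: "prof_le x PosInf" unfolding prof_le_def by (cases x) auto
lemma prof_le_PosInf_D: "prof_le PosInf x \<Longrightarrow> x = PosInf" unfolding prof_le_def by auto

lemma ex_max:
  assumes "finite S" "S \<noteq> {}" "\<forall>x\<in>S. good x"
  shows "\<exists>m\<in>S. \<forall>y\<in>S. prof_le y m"
  using assms
proof (induction S rule: finite_ne_induct)
  case (singleton x) thus ?case by (simp add: prof_le_def)
next
  case (insert x F)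
  then obtain m where m: "m \<in> F" "\<forall>y\<in>F. prof_le y m" by auto
  show ?case
  proof (cases "prof_less m x")
    case True
    have "\<forall>y\<in>insert x F. prof_le y x"
    proof
      fix y assume "y \<in> insert x F"
      thus "prof_le y x"
      proof
        assume "y \<in> F"
        hence "prof_le y m" "good y" using m insert.prems by auto
        thus ?thesis using True m insert.prems prof_less_trans[of y m x] unfolding prof_le_def by auto
      qed (simp add: prof_le_def)
    qed
    thus ?thesis by auto
  next
    case False
    hence "prof_le x m" using not_less_le insert.prems m by auto
    thus ?thesis using m by auto
  qed
qed

lemma ex_min:
  assumes "finite S" "S \<noteq> {}" "\<forall>x\<in>S. good x"
  shows "\<exists>m\<in>S. \<forall>y\<in>S. prof_le m y"
  using assms
proof (induction S rule: finite_ne_induct)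
  case (singleton x) thus ?case by (simp add: prof_le_def)
next
  case (insert x F)
  then obtain m where m: "m \<in> F" "\<forall>y\<in>F. prof_le m y" by auto
  show ?case
  proof (cases "prof_less x m")
    case True
    have "\<forall>y\<in>insert x F. prof_le x y"
    proof
      fix y assume "y \<in> insert x F"
      thus "prof_le x y"
      proof
        assume "y \<in> F"
        hence "prof_le m y" "good y" using m insert.prems by auto
        thus ?thesis using True m insert.prems prof_less_trans[of x m y] unfolding prof_le_def by auto
      qed (simp add: prof_le_def)
    qed
    thus ?thesis by auto
  next
    case False
    hence "prof_le m x" using not_less_le insert.prems m by auto
    thus ?thesis using m by auto
  qed
qed

lemma greatest_prof_eq:
  assumes "m \<in> S" "\<forall>y\<in>S. prof_le y m" shows "greatest_prof S = m"
  unfolding greatest_prof_def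
  by (rule the_equality) (use assms prof_le_antisym in blast)+

lemma least_prof_eq:
  assumes "m \<in> S" "\<forall>y\<in>S. prof_le m y" shows "least_prof S = m"
  unfolding least_prof_def
  by (rule the_equality) (use assms prof_le_antisym in blast)+




lemma inf_pigeon:
  assumes "infinite S" "\<forall>n\<in>S. g n \<in> A" "finite A"
  shows "\<exists>a\<in>A. infinite {n\<in>S. g n = a}"
proof -
  have "finite (g ` S)" by (rule finite_subset[OF _ assms(3)]) (use assms(2) in auto)
  from pigeonhole_infinite[OF assms(1) this] obtain a0 where "a0 \<in> S" "infinite {a\<in>S. g a = g a0}" by blast
  thus ?thesis using assms(2) by blast
qed

lemma eventually_inf:
  fixes g :: "nat \<Rightarrow> 'a"
  assumes "\<forall>n. g n \<in> A" "finite A"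
  shows "\<exists>N. \<forall>n\<ge>N. infinite {m. g m = g n}"
proof -
  define B where "B = {a\<in>A. finite {m. g m = a}}"
  define T where "T = (\<Union>a\<in>B. {m. g m = a})"
  have "finite B" using assms(2) B_def by simp
  hence "finite T" unfolding T_def B_def by auto
  then obtain N where N: "T \<subseteq> {..<N}" using finite_nat_bounded by blast
  have "infinite {m. g m = g n}" if "n \<ge> N" for n
  proof
    assume "finite {m. g m = g n}"
    hence "g n \<in> B" using assms(1) B_def by auto
    hence "n \<in> T" unfolding T_def by blast
    thus False using N that by auto
  qed
  thus ?thesis by blast
qed

lemma INFM_shift: "(\<exists>\<^sub>\<infinity>n. P (g (Suc n))) \<longleftrightarrow> (\<exists>\<^sub>\<infinity>n. P (g n))"
proof -
  have "(\<forall>m. \<exists>n\<ge>m. P (g (Suc n))) \<longleftrightarrow> (\<forall>m. \<exists>n\<ge>m. P (g n))"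
  proof
    assume H: "\<forall>m. \<exists>n\<ge>m. P (g (Suc n))"
    show "\<forall>m. \<exists>n\<ge>m. P (g n)"
    proof
      fix m obtain n where "n \<ge> m" "P (g (Suc n))" using H by blast
      thus "\<exists>n\<ge>m. P (g n)" by (intro exI[of _ "Suc n"]) auto
    qed
  next
    assume H: "\<forall>m. \<exists>n\<ge>m. P (g n)"
    show "\<forall>m. \<exists>n\<ge>m. P (g (Suc n))"
    proof
      fix m obtain n where "n \<ge> Suc m" "P (g n)" using H by blast
      then obtain k where "n = Suc k" "k \<ge> m" by (cases n) auto
      thus "\<exists>n\<ge>m. P (g (Suc n))" using \<open>P (g n)\<close> by blast
    qed
  qed
  thus ?thesis unfolding INFM_nat_le .
qed

lemma cycle_in_mono: "cycle_in F xs \<Longrightarrow> F \<subseteq> F' \<Longrightarrow> cycle_in F' xs"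
  unfolding cycle_in_def by blast

lemma path_prof_good: "good (path_prof col xs)"
proof -
  let ?h = "\<lambda>i x. (case x of None \<Rightarrow> 0 | Some v \<Rightarrow> unitv (col v) i) :: int"
  have "{i. (\<Sum>x\<leftarrow>xs. ?h i x) \<noteq> 0} \<subseteq> (\<lambda>x. case x of None \<Rightarrow> 0 | Some v \<Rightarrow> col v) ` set xs"
  proof (induction xs)
    case Nil then show ?case by simp
  next
    case (Cons a xs)
    show ?case
    proof
      fix i assume i: "i \<in> {i. (\<Sum>x\<leftarrow>a # xs. ?h i x) \<noteq> 0}"
      show "i \<in> (\<lambda>x. case x of None \<Rightarrow> 0 | Some v \<Rightarrow> col v) ` set (a # xs)"
      proof (cases "?h i a = 0")
        case True
        hence "(\<Sum>x\<leftarrow>xs. ?h i x) \<noteq> 0" using i by simp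
        thus ?thesis using Cons.IH by auto
      next
        case False
        then obtain v where "a = Some v" "i = col v" by (cases a) (auto simp: unitv_def split: if_splits)
        thus ?thesis by force
      qed
    qed
  qed
  hence "finite {i. (\<Sum>x\<leftarrow>xs. ?h i x) \<noteq> 0}" by (rule finite_subset) simp
  thus ?thesis unfolding path_prof_def by (simp add: fsupp_def)
qed

lemma pump:
  assumes path: "\<forall>i. Suc i < length xs \<longrightarrow> (xs!i, xs!Suc i) \<in> F"
    and ij: "i < j" "j < length xs" "xs!i = xs!j"
  shows "inf_play F (xs!0) (\<lambda>n. if n < i then xs!n else xs!(i + (n-i) mod (j-i)))"
  unfolding inf_play_def
proof (intro conjI allI)
  show "(if 0 < i then xs!0 else xs!(i + (0-i) mod (j-i))) = xs!0" by simp
next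
  fix n
  let ?f = "\<lambda>n. if n < i then xs!n else xs!(i + (n-i) mod (j-i))"
  let ?L = "j - i"
  have L: "?L > 0" using ij by simp
  show "(?f n, ?f (Suc n)) \<in> F"
  proof (cases "Suc n < i")
    case True
    thus ?thesis using path ij by auto
  next
    case False
    show ?thesis
    proof (cases "Suc n = i")
      case True
      hence "?f n = xs!n" "?f (Suc n) = xs!(Suc n)" by auto
      thus ?thesis using path ij(1,2) True by auto
    next
      case False2: False
      hence ni: "n \<ge> i" using False by simp
      define r where "r = (n - i) mod ?L"
      have rL: "r < ?L" using L r_def by simp
      have fn: "?f n = xs!(i + r)" using ni r_def by simp
      have sm: "Suc n - i = Suc (n - i)" using ni by simp
      show ?thesis
      proof (cases "Suc r = ?L")
        case True
        have "(Suc (n - i)) mod ?L = 0" using True r_def mod_Suc[of "n-i" ?L] by simp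
        hence fi: "?f (Suc n) = xs!i" using ni sm by simp
        have e: "Suc (i + r) = j" using True ij(1) by simp
        have "?f (Suc n) = xs!(Suc (i + r))" unfolding e fi using ij(3) .
        moreover have "Suc (i + r) < length xs" using True ij by simp
        ultimately show ?thesis using fn path by simp
      next
        case False
        have "(Suc (n - i)) mod ?L = Suc r" using False r_def mod_Suc[of "n-i" ?L] by simp
        hence "?f (Suc n) = xs!(Suc (i + r))" using ni sm by simp
        moreover have "Suc (i + r) < length xs" using rL ij by simp
        ultimately show ?thesis using fn path by simp
      qed
    qed
  qed
qed

locale G =
  fixes V :: "'v set" and E :: "('v \<times> 'v) set" and own col :: "'v \<Rightarrow> nat" and d :: nat
    and \<sigma> :: "('v option \<times> 'v option) set"
  assumes ar: "arena V E own col d"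
    and st: "strategy 0 V E own \<sigma>"
    and re: "reasonable V E own col \<sigma>"
begin

lemma finV: "finite V" and EV: "E \<subseteq> V \<times> V" and succE: "\<And>v. v \<in> V \<Longrightarrow> \<exists>w. (v, w) \<in> E"
  and own01: "\<And>v. v \<in> V \<Longrightarrow> own v = 0 \<or> own v = 1"
  using ar unfolding arena_def by auto

lemma finE: "finite E" by (rule finite_subset[OF EV]) (simp add: finV)

lemma sigE0: "\<sigma> \<subseteq> E0 V E own" using st unfolding strategy_def by simp

lemma edgeF:
  assumes "strategy 1 V E own \<tau>" "(x, y) \<in> \<sigma> \<union> \<tau>"
  shows "\<exists>v\<in>V. x = Some v \<and> (y = None \<or> (\<exists>w\<in>V. y = Some w \<and> (v, w) \<in> E))"
proof -
  have t: "\<tau> \<subseteq> E1 V E own" using assms(1) unfolding strategy_def by simp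
  show ?thesis
  proof (cases "(x, y) \<in> \<sigma>")
    case True
    hence "(x, y) \<in> E0 V E own" using sigE0 by blast
    thus ?thesis using EV unfolding E0_def esc_edges_def by auto
  next
    case False
    hence "(x, y) \<in> E1 V E own" using assms(2) t by blast
    thus ?thesis using EV unfolding E1_def by auto
  qed
qed

lemma noneF: "strategy 1 V E own \<tau> \<Longrightarrow> (None, y) \<notin> \<sigma> \<union> \<tau>"
  using edgeF by blast

lemma succF:
  assumes "strategy 1 V E own \<tau>" "v \<in> V" shows "\<exists>y. (Some v, y) \<in> \<sigma> \<union> \<tau>"
proof (cases "own v = 0")
  case True thus ?thesis using st assms(2) unfolding strategy_def by auto
next
  case False
  hence "own v = 1" using own01[OF assms(2)] by simp
  thus ?thesis using assms unfolding strategy_def by auto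
qed

lemma F_sub: "strategy 1 V E own \<tau> \<Longrightarrow> \<sigma> \<union> \<tau> \<subseteq> \<sigma> \<union> E1 V E own"
  unfolding strategy_def by auto

lemma inf_won:
  assumes tau: "strategy 1 V E own \<tau>" and ip: "inf_play (\<sigma> \<union> \<tau>) x f"
  shows "won0_seq col (\<lambda>n. the (f n))"
proof -
  let ?F = "\<sigma> \<union> \<tau>"
  define g where "g = (\<lambda>n. the (f n))"
  have edge: "(f n, f (Suc n)) \<in> ?F" for n using ip unfolding inf_play_def by blast
  have fS: "f n = Some (g n) \<and> g n \<in> V" for n
    using edgeF[OF tau edge[of n]] unfolding g_def by auto
  have cA: "\<forall>n. col (g n) \<in> col ` V" using fS by blast
  have fcV: "finite (col ` V)" using finV by simp
  obtain N where N: "\<forall>n\<ge>N. infinite {m. col (g m) = col (g n)}"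
    using eventually_inf[OF cA fcV] by blast
  define C where "C = {c. \<exists>\<^sub>\<infinity>n. col (g n) = c}"
  have CI: "c \<in> C \<longleftrightarrow> infinite {n. col (g n) = c}" for c
    unfolding C_def INFM_iff_infinite by simp
  have inC: "col (g n) \<in> C" if "n \<ge> N" for n using N that CI by blast
  have Csub: "C \<subseteq> col ` V"
  proof
    fix c assume "c \<in> C"
    hence "infinite {n. col (g n) = c}" using CI by blast
    hence "{n. col (g n) = c} \<noteq> {}" by (intro notI) simp
    then obtain n where "col (g n) = c" by blast
    thus "c \<in> col ` V" using cA by metis
  qed
  have fC: "finite C" by (rule finite_subset[OF Csub fcV])
  have neC: "C \<noteq> {}" using inC[of N] by blast
  define c where "c = Max C"
  have cC: "c \<in> C" using Max_in[OF fC neC] c_def by simp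
  have cmax: "c' \<le> c" if "c' \<in> C" for c' using Max_ge[OF fC that] c_def by simp
  have inf1: "infinite {n. col (g n) = c}" using cC CI by blast
  define S where "S = {n. N \<le> n \<and> col (g n) = c}"
  have "{n. col (g n) = c} \<subseteq> S \<union> {..<N}" unfolding S_def by auto
  hence infS: "infinite S" using inf1 finite_subset[of "{n. col (g n) = c}" "S \<union> {..<N}"] by auto
  have "\<forall>n\<in>S. g n \<in> V" using fS by blast
  from inf_pigeon[OF infS this finV] obtain v where v: "v \<in> V" "infinite {n\<in>S. g n = v}" by blast
  have "{n\<in>S. g n = v} \<noteq> {}" using v(2) by (intro notI) simp
  then obtain m where m: "m \<in> S" "g m = v" by blast
  from v(2) obtain n where n: "n > m" "n \<in> {n\<in>S. g n = v}"
    using infinite_nat_iff_unbounded by blast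
  define xs where "xs = map f [m..<n]"
  have len: "length xs = n - m" unfolding xs_def by simp
  have cyc: "cycle_in ?F xs"
    unfolding cycle_in_def
  proof (intro conjI allI impI)
    show "xs \<noteq> []" using n(1) unfolding xs_def by simp
  next
    fix i assume "Suc i < length xs"
    hence "xs ! i = f (m + i)" "xs ! Suc i = f (Suc (m + i))" unfolding xs_def by auto
    thus "(xs ! i, xs ! Suc i) \<in> ?F" using edge by simp
  next
    have "last xs = f (n - 1)" unfolding xs_def using n(1)
      by (simp add: last_map)
    moreover have "hd xs = f m" unfolding xs_def using n(1) by (simp add: hd_map)
    moreover have "g n = v" using n(2) by simp
    moreover have "f m = f n" using fS[of m] fS[of n] m(2) \<open>g n = v\<close> by simp
    moreover have "Suc (n - 1) = n" using n(1) by simp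
    ultimately show "(last xs, hd xs) \<in> ?F" using edge[of "n - 1"] by simp
  qed
  hence "cycle_in (\<sigma> \<union> E1 V E own) xs" using cycle_in_mono F_sub[OF tau] by blast
  hence ev: "\<not> odd (Max {col v | v. Some v \<in> set xs})" using re unfolding reasonable_def by blast
  have setx: "{col v | v. Some v \<in> set xs} = (\<lambda>i. col (g i)) ` {m..<n}"
  proof -
    have "Some w \<in> set xs \<longleftrightarrow> (\<exists>i\<in>{m..<n}. w = g i)" for w
      unfolding xs_def using fS by auto
    thus ?thesis by (auto simp: image_def)
  qed
  have "Max ((\<lambda>i. col (g i)) ` {m..<n}) = c"
  proof (rule Max_eqI)
    show "finite ((\<lambda>i. col (g i)) ` {m..<n})" by simp
  next
    fix y assume "y \<in> (\<lambda>i. col (g i)) ` {m..<n}"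
    then obtain i where "i \<in> {m..<n}" "y = col (g i)" by blast
    moreover have "N \<le> m" using m S_def by simp
    ultimately show "y \<le> c" using inC cmax by auto
  next
    show "c \<in> (\<lambda>i. col (g i)) ` {m..<n}" using m n S_def by auto
  qed
  hence "even c" using ev setx by simp
  thus ?thesis unfolding won0_seq_def C_def c_def g_def by simp
qed

abbreviation "Fof \<tau> \<equiv> \<sigma> \<union> \<tau>"

lemma profs_good:
  assumes tau: "strategy 1 V E own \<tau>" and y: "y \<in> play_profs col (\<sigma> \<union> \<tau>) x"
  shows "good y \<and> y \<noteq> NegInf"
proof -
  from y consider (fin) xs where "y = path_prof col xs"
    | (inf) f where "y = (if won0_seq col (\<lambda>n. the (f n)) then PosInf else NegInf)" "inf_play (\<sigma> \<union> \<tau>) x f"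
    unfolding play_profs_def by blast
  thus ?thesis
  proof cases
    case fin thus ?thesis using path_prof_good[of col xs] by (simp add: path_prof_def)
  next
    case inf thus ?thesis using inf_won[OF tau inf(2)] by simp
  qed
qed

lemma walk:
  assumes tau: "strategy 1 V E own \<tau>" and u: "u \<in> V"
  shows "(\<exists>f. inf_play (\<sigma> \<union> \<tau>) (Some u) f) \<or> (\<exists>xs. fin_play (\<sigma> \<union> \<tau>) (Some u) xs)"
proof -
  let ?F = "\<sigma> \<union> \<tau>"
  define g where "g = rec_nat (Some u) (\<lambda>n x. if x = None then None else SOME y. (x, y) \<in> ?F)"
  have g0: "g 0 = Some u" unfolding g_def by simp
  have gS: "g (Suc n) = (if g n = None then None else SOME y. (g n, y) \<in> ?F)" for n
    unfolding g_def by simp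
  have inv: "g n = None \<or> (\<exists>v\<in>V. g n = Some v)" for n
  proof (induction n)
    case 0 thus ?case using g0 u by simp
  next
    case (Suc n)
    show ?case
    proof (cases "g n = None")
      case True thus ?thesis using gS by simp
    next
      case False
      then obtain v where v: "v \<in> V" "g n = Some v" using Suc by auto
      then obtain y where "(Some v, y) \<in> ?F" using succF[OF tau] by blast
      hence "(g n, g (Suc n)) \<in> ?F" using gS v someI[of "\<lambda>y. (Some v, y) \<in> ?F"] by simp
      thus ?thesis using edgeF[OF tau] by blast
    qed
  qed
  have step: "g n \<noteq> None \<Longrightarrow> (g n, g (Suc n)) \<in> ?F" for n
  proof -
    assume "g n \<noteq> None"
    then obtain v where v: "v \<in> V" "g n = Some v" using inv[of n] by auto
    then obtain y where "(Some v, y) \<in> ?F" using succF[OF tau] by blast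
    thus "(g n, g (Suc n)) \<in> ?F" using gS v someI[of "\<lambda>y. (Some v, y) \<in> ?F"] by simp
  qed
  show ?thesis
  proof (cases "\<exists>n. g n = None")
    case False
    hence "inf_play ?F (Some u) g" unfolding inf_play_def using g0 step by simp
    thus ?thesis by blast
  next
    case True
    define n0 where "n0 = (LEAST n. g n = None)"
    have n0: "g n0 = None" unfolding n0_def by (rule LeastI_ex[OF True])
    have bef: "i < n0 \<Longrightarrow> g i \<noteq> None" for i using not_less_Least[of i "\<lambda>n. g n = None"] n0_def by simp
    define xs where "xs = map g [0..<Suc n0]"
    have "fin_play ?F (Some u) xs"
      unfolding fin_play_def
    proof (intro conjI allI impI)
      show "xs \<noteq> []" unfolding xs_def by simp
      show "hd xs = Some u" unfolding xs_def using g0 by (simp del: upt_Suc add: hd_map)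
    next
      fix i assume "Suc i < length xs"
      hence "i < n0" "xs ! i = g i" "xs ! Suc i = g (Suc i)" unfolding xs_def
        by (simp_all del: upt_Suc add: nth_map)
      thus "(xs ! i, xs ! Suc i) \<in> ?F" using step bef by simp
    next
      fix y
      have "last xs = None" unfolding xs_def using n0 by (simp del: upt_Suc add: last_map)
      thus "(last xs, y) \<notin> ?F" using noneF[OF tau] by simp
    qed
    thus ?thesis by blast
  qed
qed

lemma fin_plays_finite:
  assumes tau: "strategy 1 V E own \<tau>" and u: "u \<in> V"
    and noinf: "\<not> (\<exists>f. inf_play (\<sigma> \<union> \<tau>) (Some u) f)"
  shows "finite {xs. fin_play (\<sigma> \<union> \<tau>) (Some u) xs}"
proof -
  let ?F = "\<sigma> \<union> \<tau>"
  let ?A = "insert None (Some ` V)"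
  have fA: "finite ?A" using finV by simp
  have "{xs. fin_play ?F (Some u) xs} \<subseteq> {xs. set xs \<subseteq> ?A \<and> length xs \<le> card ?A}"
  proof
    fix xs assume "xs \<in> {xs. fin_play ?F (Some u) xs}"
    hence fp: "fin_play ?F (Some u) xs" by simp
    have path: "\<forall>i. Suc i < length xs \<longrightarrow> (xs!i, xs!Suc i) \<in> ?F" using fp unfolding fin_play_def by blast
    have ne: "xs \<noteq> []" and hd: "hd xs = Some u" using fp unfolding fin_play_def by auto
    have x0: "xs ! 0 = Some u" using ne hd by (simp add: hd_conv_nth)
    have setA: "set xs \<subseteq> ?A"
    proof
      fix z assume "z \<in> set xs"
      then obtain k where k: "k < length xs" "xs ! k = z" by (auto simp: in_set_conv_nth)
      show "z \<in> ?A"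
      proof (cases k)
        case 0 thus ?thesis using k x0 u by auto
      next
        case (Suc k')
        hence "(xs ! k', xs ! Suc k') \<in> ?F" using path k(1) by simp
        hence "(xs ! k', z) \<in> ?F" using k(2) Suc by simp
        thus ?thesis using edgeF[OF tau] by blast
      qed
    qed
    have "distinct xs"
    proof (rule ccontr)
      assume "\<not> distinct xs"
      then obtain i j where ij: "i < length xs" "j < length xs" "i \<noteq> j" "xs!i = xs!j"
        unfolding distinct_conv_nth by blast
      show False
      proof (cases "i < j")
        case True
        from pump[OF path True ij(2) ij(4)] show False using noinf x0 by auto
      next
        case False
        hence "j < i" using ij(3) by simp
        from pump[OF path this ij(1) ij(4)[symmetric]] show False using noinf x0 by auto
      qed
    qed
    hence "length xs = card (set xs)" by (simp add: distinct_card)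
    also have "\<dots> \<le> card ?A" using setA fA by (rule card_mono[rotated])
    finally show "xs \<in> {xs. set xs \<subseteq> ?A \<and> length xs \<le> card ?A}" using setA by simp
  qed
  thus ?thesis using finite_lists_length_le[OF fA] finite_subset by blast
qed

lemma greatest:
  assumes tau: "strategy 1 V E own \<tau>" and u: "u \<in> V"
  shows "greatest_prof (play_profs col (\<sigma> \<union> \<tau>) (Some u)) \<in> play_profs col (\<sigma> \<union> \<tau>) (Some u)
    \<and> (\<forall>y\<in>play_profs col (\<sigma> \<union> \<tau>) (Some u). prof_le y (greatest_prof (play_profs col (\<sigma> \<union> \<tau>) (Some u))))"
proof -
  let ?F = "\<sigma> \<union> \<tau>"
  let ?P = "play_profs col ?F (Some u)"
  have "\<exists>m\<in>?P. \<forall>y\<in>?P. prof_le y m"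
  proof (cases "\<exists>f. inf_play ?F (Some u) f")
    case True
    then obtain f where f: "inf_play ?F (Some u) f" by blast
    hence "PosInf \<in> ?P" using inf_won[OF tau f] unfolding play_profs_def by force
    thus ?thesis using prof_le_PosInf by blast
  next
    case False
    have P: "?P = path_prof col ` {xs. fin_play ?F (Some u) xs}"
      using False unfolding play_profs_def by auto
    have "finite ?P" unfolding P using fin_plays_finite[OF tau u False] by simp
    moreover have "?P \<noteq> {}" unfolding P using walk[OF tau u] False by auto
    moreover have "\<forall>x\<in>?P. good x" using profs_good[OF tau] by blast
    ultimately show ?thesis by (rule ex_max)
  qed
  then obtain m where "m \<in> ?P" "\<forall>y\<in>?P. prof_le y m" by blast
  thus ?thesis using greatest_prof_eq by simp
qed

lemma prepend:
  assumes tau: "strategy 1 V E own \<tau>" and e: "(Some u, Some w) \<in> \<sigma> \<union> \<tau>"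
    and y: "y \<in> play_profs col (\<sigma> \<union> \<tau>) (Some w)"
  shows "prof_add (Fin (unitv (col u))) y \<in> play_profs col (\<sigma> \<union> \<tau>) (Some u)"
proof -
  let ?F = "\<sigma> \<union> \<tau>"
  from y consider (fin) xs where "y = path_prof col xs" "fin_play ?F (Some w) xs"
    | (inf) f where "y = (if won0_seq col (\<lambda>n. the (f n)) then PosInf else NegInf)" "inf_play ?F (Some w) f"
    unfolding play_profs_def by blast
  thus ?thesis
  proof cases
    case fin
    have ne: "xs \<noteq> []" and h: "xs ! 0 = Some w"
      and path: "\<forall>i. Suc i < length xs \<longrightarrow> (xs ! i, xs ! Suc i) \<in> ?F"
      and lst: "\<forall>y. (last xs, y) \<notin> ?F"
      using fin(2) unfolding fin_play_def by (auto simp: hd_conv_nth)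
    have fp: "fin_play ?F (Some u) (Some u # xs)"
      unfolding fin_play_def
    proof (intro conjI allI impI)
      fix i assume i: "Suc i < length (Some u # xs)"
      show "((Some u # xs) ! i, (Some u # xs) ! Suc i) \<in> ?F"
      proof (cases i)
        case 0 thus ?thesis using h e by simp
      next
        case (Suc k) thus ?thesis using path i by simp
      qed
    next
      fix y show "(last (Some u # xs), y) \<notin> ?F" using lst ne by simp
    qed simp_all
    have "path_prof col (Some u # xs) = prof_add (Fin (unitv (col u))) y"
      unfolding fin(1) path_prof_def by simp
    thus ?thesis using fp unfolding play_profs_def by (metis (mono_tags, lifting) UnI1 mem_Collect_eq)
  next
    case inf
    define g where "g = (\<lambda>n. case n of 0 \<Rightarrow> Some u | Suc m \<Rightarrow> f m)"
    have ip: "inf_play ?F (Some u) g"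
      unfolding inf_play_def
    proof (intro conjI allI)
      show "g 0 = Some u" unfolding g_def by simp
    next
      fix n show "(g n, g (Suc n)) \<in> ?F"
        using inf(2) e unfolding inf_play_def g_def by (cases n) auto
    qed
    have "(\<exists>\<^sub>\<infinity>n. col (the (g n)) = c) \<longleftrightarrow> (\<exists>\<^sub>\<infinity>n. col (the (f n)) = c)" for c
      using INFM_shift[of "\<lambda>x. col (the x) = c" g] unfolding g_def by simp
    hence "won0_seq col (\<lambda>n. the (g n)) = won0_seq col (\<lambda>n. the (f n))"
      unfolding won0_seq_def by simp
    hence "prof_add (Fin (unitv (col u))) y = (if won0_seq col (\<lambda>n. the (g n)) then PosInf else NegInf)"
      using inf(1) by simp
    thus ?thesis using ip unfolding play_profs_def by blast
  qed
qed

lemma finE1: "finite (E1 V E own)"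
proof -
  have "E1 V E own \<subseteq> (\<lambda>(a, b). (Some a, Some b)) ` E" unfolding E1_def by auto
  thus ?thesis using finE finite_subset by blast
qed

lemma E1_strat: "strategy 1 V E own (E1 V E own)"
  unfolding strategy_def using succE by (auto simp: E1_def)

lemma val_char:
  assumes u: "u \<in> V"
  shows "\<exists>\<tau>. strategy 1 V E own \<tau> \<and>
     valuation V E own col \<sigma> (Some u) = greatest_prof (play_profs col (\<sigma> \<union> \<tau>) (Some u)) \<and>
     (\<forall>\<tau>'. strategy 1 V E own \<tau>' \<longrightarrow> prof_le (valuation V E own col \<sigma> (Some u)) (greatest_prof (play_profs col (\<sigma> \<union> \<tau>') (Some u))))"
proof -
  let ?h = "\<lambda>\<tau>. greatest_prof (play_profs col (\<sigma> \<union> \<tau>) (Some u))"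
  let ?T = "{?h \<tau> | \<tau>. strategy 1 V E own \<tau>}"
  have T: "?T = ?h ` {\<tau>. strategy 1 V E own \<tau>}" by blast
  have "{\<tau>. strategy 1 V E own \<tau>} \<subseteq> Pow (E1 V E own)" unfolding strategy_def by auto
  hence "finite {\<tau>. strategy 1 V E own \<tau>}" using finE1 finite_subset by blast
  hence fT: "finite ?T" unfolding T by simp
  have neT: "?T \<noteq> {}" using E1_strat by blast
  have gT: "\<forall>x\<in>?T. good x" using greatest[OF _ u] profs_good by blast
  obtain m where m: "m \<in> ?T" "\<forall>y\<in>?T. prof_le m y" using ex_min[OF fT neT gT] by blast
  have "valuation V E own col \<sigma> (Some u) = m"
    unfolding valuation_def using least_prof_eq[OF m] by simp
  thus ?thesis using m by blast
qed

lemma val_good: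
  assumes u: "u \<in> V"
  shows "good (valuation V E own col \<sigma> (Some u)) \<and> valuation V E own col \<sigma> (Some u) \<noteq> NegInf"
  using val_char[OF u] greatest[OF _ u] profs_good by metis

lemma p1step:
  assumes u: "u \<in> V" and o: "own u = 1"
  shows "\<exists>w. (u, w) \<in> E \<and> prof_le (prof_add (Fin (unitv (col u))) (valuation V E own col \<sigma> (Some w)))
                                 (valuation V E own col \<sigma> (Some u))"
proof -
  obtain \<tau> where tau: "strategy 1 V E own \<tau>"
    and vu: "valuation V E own col \<sigma> (Some u) = greatest_prof (play_profs col (\<sigma> \<union> \<tau>) (Some u))"
    using val_char[OF u] by blast
  obtain y where "(Some u, y) \<in> \<tau>" using tau u o unfolding strategy_def by auto
  moreover have "\<tau> \<subseteq> E1 V E own" using tau unfolding strategy_def by simp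
  ultimately obtain w where w: "(Some u, Some w) \<in> \<tau>" "(u, w) \<in> E" unfolding E1_def by blast
  have wV: "w \<in> V" using w(2) EV by blast
  let ?Gw = "greatest_prof (play_profs col (\<sigma> \<union> \<tau>) (Some w))"
  have Gw: "?Gw \<in> play_profs col (\<sigma> \<union> \<tau>) (Some w)" using greatest[OF tau wV] by blast
  have gGw: "good ?Gw" using profs_good[OF tau Gw] by blast
  have "prof_add (Fin (unitv (col u))) ?Gw \<in> play_profs col (\<sigma> \<union> \<tau>) (Some u)"
    using prepend[OF tau _ Gw] w(1) by blast
  hence l1: "prof_le (prof_add (Fin (unitv (col u))) ?Gw) (valuation V E own col \<sigma> (Some u))"
    using greatest[OF tau u] vu by simp
  have "prof_le (valuation V E own col \<sigma> (Some w)) ?Gw" using val_char[OF wV] tau by blast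
  hence l2: "prof_le (prof_add (Fin (unitv (col u))) (valuation V E own col \<sigma> (Some w)))
                     (prof_add (Fin (unitv (col u))) ?Gw)" by (rule prof_le_add)
  have fu: "fsupp (unitv (col u))" unfolding fsupp_def unitv_def by simp
  have "prof_le (prof_add (Fin (unitv (col u))) (valuation V E own col \<sigma> (Some w)))
                     (valuation V E own col \<sigma> (Some u))"
    by (rule prof_le_trans[OF l2 l1]) (use good_add fu gGw val_good wV u in auto)
  thus ?thesis using w(2) by blast
qed

end


theorem mainTheorem10:
  fixes V :: "'v set" and E :: "('v \<times> 'v) set" and own col :: "'v \<Rightarrow> nat" and d :: nat
    and \<sigma> :: "('v option \<times> 'v option) set" and s :: 'v
  assumes "arena V E own col d"
    and "strategy 0 V E own \<sigma>"
    and "reasonable V E own col \<sigma>"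
    and "s \<in> W0 V E own col"
    and "prof_less (valuation V E own col \<sigma> (Some s)) PosInf"
  shows "improvements V E own col \<sigma> \<noteq> {}"
proof
  assume imp: "improvements V E own col \<sigma> = {}"
  interpret G V E own col d \<sigma> using assms(1-3) by unfold_locales
  define val where "val = valuation V E own col \<sigma>"
  have fu: "fsupp (unitv c)" for c unfolding fsupp_def unitv_def by simp
  have p0step: "prof_le (prof_add (Fin (unitv (col u))) (val (Some w))) (val (Some u))"
    if u: "u \<in> V" and o: "own u = 0" and e: "(u, w) \<in> E" for u w
  proof -
    have wV: "w \<in> V" using e EV by blast
    have "(Some u, Some w) \<in> E0 V E own" using u o e unfolding E0_def esc_edges_def by auto
    hence "\<not> prof_less (val (Some u)) (prof_add (wp col (Some u)) (val (Some w)))"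
      using imp unfolding improvements_def val_def by blast
    hence "\<not> prof_less (val (Some u)) (prof_add (Fin (unitv (col u))) (val (Some w)))"
      by (simp add: wp_def)
    moreover have "good (val (Some u))" using val_good[OF u] val_def by simp
    moreover have "good (prof_add (Fin (unitv (col u))) (val (Some w)))"
      using good_add fu val_good[OF wV] val_def by simp
    ultimately show ?thesis using not_less_le by blast
  qed
  have stepex: "\<exists>w. (u, w) \<in> E \<and> prof_le (prof_add (Fin (unitv (col u))) (val (Some w))) (val (Some u))"
    if u: "u \<in> V" for u
  proof (cases "own u = 0")
    case True
    obtain w where "(u, w) \<in> E" using succE[OF u] by blast
    thus ?thesis using p0step[OF u True] by blast
  next
    case False
    hence "own u = 1" using own01[OF u] by simp
    thus ?thesis using p1step[OF u] val_def by simp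
  qed
  obtain str where hs: "hist_strategy0 V E own str"
    and win: "\<forall>f. consistent_play E own str s f \<longrightarrow> won0_seq col f" and sV: "s \<in> V"
    using assms(4) unfolding W0_def by blast
  define P where "P = (\<lambda>u w. (u, w) \<in> E \<and> prof_le (prof_add (Fin (unitv (col u))) (val (Some w))) (val (Some u)))"
  define nxt where "nxt = (\<lambda>h. if own (last h) = 0 then str h else SOME w. P (last h) w)"
  have nxt_prop: "P (last h) (nxt h)" if "set h \<subseteq> V" "h \<noteq> []" for h
  proof -
    have lV: "last h \<in> V" using that by auto
    show ?thesis
    proof (cases "own (last h) = 0")
      case True
      hence e: "(last h, str h) \<in> E" using hs that unfolding hist_strategy0_def by blast
      thus ?thesis using p0step[OF lV True e] True unfolding P_def nxt_def by simp
    next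
      case False
      have "\<exists>w. P (last h) w" using stepex[OF lV] unfolding P_def .
      hence "P (last h) (SOME w. P (last h) w)" by (rule someI_ex)
      thus ?thesis using False unfolding nxt_def by simp
    qed
  qed
  define hh where "hh = rec_nat [s] (\<lambda>n h. h @ [nxt h])"
  have hh0: "hh 0 = [s]" unfolding hh_def by simp
  have hhS: "hh (Suc n) = hh n @ [nxt (hh n)]" for n unfolding hh_def by simp
  have hhV: "set (hh n) \<subseteq> V \<and> hh n \<noteq> []" for n
  proof (induction n)
    case 0 thus ?case using hh0 sV by simp
  next
    case (Suc n)
    have "P (last (hh n)) (nxt (hh n))" using nxt_prop Suc by blast
    hence "nxt (hh n) \<in> V" unfolding P_def using EV by blast
    thus ?case using Suc hhS by simp
  qed
  define f where "f = (\<lambda>n. last (hh n))"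
  have fS: "f (Suc n) = nxt (hh n)" for n unfolding f_def hhS by simp
  have mapf: "map f [0..<Suc n] = hh n" for n
  proof (induction n)
    case 0 thus ?case using hh0 by (simp add: f_def)
  next
    case (Suc n)
    have "map f [0..<Suc (Suc n)] = map f [0..<Suc n] @ [f (Suc n)]" by simp
    also have "\<dots> = hh (Suc n)" using Suc fS hhS by simp
    finally show ?case .
  qed
  have Pf: "P (f n) (f (Suc n))" for n using nxt_prop hhV fS unfolding f_def by simp
  have fV: "f n \<in> V" for n using hhV[of n] unfolding f_def by auto
  have "consistent_play E own str s f"
    unfolding consistent_play_def
  proof (intro conjI allI impI)
    show "f 0 = s" using hh0 by (simp add: f_def)
  next
    fix n show "(f n, f (Suc n)) \<in> E" using Pf unfolding P_def by blast
  next
    fix n assume "own (f n) = 0"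
    hence "nxt (hh n) = str (hh n)" unfolding nxt_def f_def by simp
    thus "f (Suc n) = str (map f [0..<Suc n])" unfolding mapf fS .
  qed
  hence won: "won0_seq col f" using win by blast
  have stp: "prof_le (prof_add (Fin (unitv (col (f n)))) (val (Some (f (Suc n))))) (val (Some (f n)))" for n
    using Pf unfolding P_def by blast
  have notPos: "val (Some (f n)) \<noteq> PosInf" for n
  proof (induction n)
    case 0
    have "f 0 = s" using hh0 by (simp add: f_def)
    thus ?case using assms(5) prof_less_irrefl val_def by auto
  next
    case (Suc n)
    show ?case
    proof
      assume "val (Some (f (Suc n))) = PosInf"
      hence "prof_le PosInf (val (Some (f n)))" using stp[of n] by simp
      thus False using Suc prof_le_PosInf_D by blast
    qed
  qed
  define p where "p = (\<lambda>n. case val (Some (f n)) of Fin q \<Rightarrow> q)"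
  have vp: "val (Some (f n)) = Fin (p n) \<and> fsupp (p n)" for n
    using val_good[OF fV[of n]] notPos[of n] unfolding p_def val_def
    by (cases "valuation V E own col \<sigma> (Some (f n))") auto
  have stpF: "prof_le (Fin (\<lambda>i. unitv (col (f n)) i + p (Suc n) i)) (Fin (p n))" for n
    using stp[of n] vp[of n] vp[of "Suc n"] by simp
  define Sg where "Sg = (\<lambda>m n i. \<Sum>j\<in>{m..<n}. unitv (col (f j)) i)"
  have Sg_nn: "Sg m n i \<ge> 0" for m n i unfolding Sg_def unitv_def by (rule sum_nonneg) simp
  have Sg_nz: "Sg m n i \<noteq> 0 \<longleftrightarrow> i \<in> (\<lambda>j. col (f j)) ` {m..<n}" for m n i
  proof -
    have "Sg m n i = 0 \<longleftrightarrow> (\<forall>j\<in>{m..<n}. unitv (col (f j)) i = 0)"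
      unfolding Sg_def by (rule sum_nonneg_eq_0_iff) (auto simp: unitv_def)
    thus ?thesis unfolding unitv_def by auto
  qed
  have Sg_fs: "fsupp (Sg m n)" for m n
  proof -
    have "{i. Sg m n i \<noteq> 0} = (\<lambda>j. col (f j)) ` {m..<n}" using Sg_nz by blast
    thus ?thesis unfolding fsupp_def by simp
  qed
  have seg: "prof_le (Fin (\<lambda>i. Sg m n i + p n i)) (Fin (p m))" if "m \<le> n" for m n
    using that
  proof (induction n rule: dec_induct)
    case base
    have "(\<lambda>i. Sg m m i + p m i) = p m" unfolding Sg_def by simp
    thus ?case by (simp add: prof_le_def)
  next
    case (step n)
    have eq: "(\<lambda>i. Sg m (Suc n) i + p (Suc n) i) = (\<lambda>i. Sg m n i + (unitv (col (f n)) i + p (Suc n) i))"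
      unfolding Sg_def using step(1) by (simp add: fun_eq_iff)
    have "prof_le (prof_add (Fin (Sg m n)) (Fin (\<lambda>i. unitv (col (f n)) i + p (Suc n) i)))
                  (prof_add (Fin (Sg m n)) (Fin (p n)))"
      by (rule prof_le_add[OF stpF])
    hence l1: "prof_le (Fin (\<lambda>i. Sg m (Suc n) i + p (Suc n) i)) (Fin (\<lambda>i. Sg m n i + p n i))"
      unfolding eq by simp
    show ?case
      by (rule prof_le_trans[OF l1 step(3)]) (use Sg_fs vp fu fsupp_add in auto)
  qed
  have "\<forall>n\<in>UNIV. p n \<in> (\<lambda>v. case val (Some v) of Fin q \<Rightarrow> q) ` V"
    using fV unfolding p_def by blast
  from inf_pigeon[OF _ this] obtain q where q: "infinite {n. p n = q}"
    using finV by auto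
  have cA: "\<forall>n. col (f n) \<in> col ` V" using fV by blast
  have fcV: "finite (col ` V)" using finV by simp
  obtain N where N: "\<forall>n\<ge>N. infinite {m. col (f m) = col (f n)}"
    using eventually_inf[OF cA fcV] by blast
  define C where "C = {c. \<exists>\<^sub>\<infinity>n. col (f n) = c}"
  have CI: "c \<in> C \<longleftrightarrow> infinite {n. col (f n) = c}" for c
    unfolding C_def INFM_iff_infinite by simp
  have inC: "col (f n) \<in> C" if "n \<ge> N" for n using N that CI by blast
  have Csub: "C \<subseteq> col ` V"
  proof
    fix c assume "c \<in> C"
    hence "infinite {n. col (f n) = c}" using CI by blast
    hence "{n. col (f n) = c} \<noteq> {}" by (intro notI) simp
    then obtain n where "col (f n) = c" by blast
    thus "c \<in> col ` V" using cA by metis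
  qed
  have fC: "finite C" by (rule finite_subset[OF Csub fcV])
  have neC: "C \<noteq> {}" using inC[of N] by blast
  define c where "c = Max C"
  have cC: "c \<in> C" using Max_in[OF fC neC] c_def by simp
  have cmax: "c' \<le> c" if "c' \<in> C" for c' using Max_ge[OF fC that] c_def by simp
  have evc: "even c" using won unfolding won0_seq_def c_def C_def .
  obtain m where m: "m \<ge> N" "p m = q" using q unfolding infinite_nat_iff_unbounded_le by blast
  obtain k where k: "k \<ge> m" "col (f k) = c" using cC CI unfolding infinite_nat_iff_unbounded_le by blast
  obtain n where n: "n > k" "p n = q" using q unfolding infinite_nat_iff_unbounded by blast
  have mn: "m \<le> n" using k n by simp
  have sg: "prof_le (Fin (\<lambda>i. Sg m n i + q i)) (Fin q)" using seg[OF mn] m n by simp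
  have Sgc: "Sg m n c \<noteq> 0" using Sg_nz k n by auto
  have Sne: "Sg m n \<noteq> (\<lambda>i. 0)" using Sgc by (metis)
  have "(\<lambda>i. Sg m n i + q i) \<noteq> q"
  proof
    assume "(\<lambda>i. Sg m n i + q i) = q"
    hence "Sg m n c + q c = q c" by metis
    thus False using Sgc by simp
  qed
  hence "vec_less (\<lambda>i. Sg m n i + q i) q" using sg unfolding prof_le_def by simp
  hence "vec_less (\<lambda>i. q i + Sg m n i) (\<lambda>i. q i + 0)" by (simp add: add.commute)
  hence vl: "vec_less (Sg m n) (\<lambda>i. 0)" by (simp only: vec_less_shift)
  have setS: "{i. Sg m n i \<noteq> 0} = (\<lambda>j. col (f j)) ` {m..<n}" using Sg_nz by blast
  have mx: "Max ((\<lambda>j. col (f j)) ` {m..<n}) = c"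
  proof (rule Max_eqI)
    show "finite ((\<lambda>j. col (f j)) ` {m..<n})" by simp
  next
    fix y assume "y \<in> (\<lambda>j. col (f j)) ` {m..<n}"
    then obtain i where "i \<in> {m..<n}" "y = col (f i)" by blast
    thus "y \<le> c" using inC cmax m(1) by auto
  next
    show "c \<in> (\<lambda>j. col (f j)) ` {m..<n}" using k n by auto
  qed
  have "(even c \<and> Sg m n c < 0) \<or> (odd c \<and> Sg m n c > 0)"
    using vl unfolding vec_less_def Let_def setS mx by simp
  thus False using evc Sg_nn[of m n c] by auto
qed


end
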